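(* Let $k\geqslant 2$ and $m_1,\ldots,m_k\geqslant 4$. Write $S^{m_i}=\{(\mathbf{x}_i,q_i):\mathbf{x}_i\in\mathbb{R}^{m_i-3},\ q_i\in\mathbb{H},\ |\mathbf{x}_i|^2+|q_i|^2=1\}$. Let the quaternionic torus $\mathrm{Sp}(1)^{k-1}$ act on $S^{m_1}\times\cdots\times S^{m_k}$ by \[ (r_1,\ldots,r_{k-1})\cdot((\mathbf{x}_1,q_1),\ldots,(\mathbf{x}_k,q_k))=((\mathbf{x}_1,q_1r_1^{-1}),(\mathbf{x}_2,r_1q_2r_2^{-1}),\ldots,(\mathbf{x}_{k-1},r_{k-2}q_{k-1}r_{k-1}^{-1}),(\mathbf{x}_k,r_{k-1}q_k)). \] Then the orbit space $(S^{m_1}\times\cdots\times S^{m_k})/\mathrm{Sp}(1)^{k-1}$ is homeomorphic to the sphere $S^m$, $m=m_1+\cdots+m_k-3(k-1)$, and the canonical projection onto the orbit space is given by \[ ((\mathbf{x}_1,q_1),\ldots,(\mathbf{x}_k,q_k))\mapsto\frac{(\mathbf{x}_1,\ldots,\mathbf{x}_k,q_1q_2\cdots q_k)}{\sqrt{|\mathbf{x}_1|^2+\cdots+|\mathbf{x}_k|^2+|q_1q_2\cdots q_k|^2}}\in S^m\subset\mathbb{R}^{m_1-3}\times\cdots\times\mathbb{R}^{m_k-3}\times\mathbb{H}. \]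
   Context: $\mathbb{H}$ is the algebra of quaternions with its Euclidean norm; $\mathrm{Sp}(1)$ is the group of unit quaternions. *)

theory Defs
  imports "HOL-Analysis.Analysis"
begin

text \<open>Quaternions: H = R^4 represented as nested real tuples (a,b,c,d) = a + b i + c j + d k.
  The product-type norm on real \<times> real \<times> real \<times> real is the Euclidean norm
  sqrt(a^2+b^2+c^2+d^2), which is the quaternionic norm.\<close>

type_synonym quat = "real \<times> real \<times> real \<times> real"

definition hone :: quat where "hone = (1, 0, 0, 0)"

definition hmult :: "quat \<Rightarrow> quat \<Rightarrow> quat" where
  "hmult p q = (case p of (a1, b1, c1, d1) \<Rightarrow> case q of (a2, b2, c2, d2) \<Rightarrow>
     (a1*a2 - b1*b2 - c1*c2 - d1*d2,
      a1*b2 + b1*a2 + c1*d2 - d1*c2,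
      a1*c2 - b1*d2 + c1*a2 + d1*b2,
      a1*d2 + b1*c2 - c1*b2 + d1*a2))"

definition hcnj :: "quat \<Rightarrow> quat" where
  "hcnj q = (case q of (a, b, c, d) \<Rightarrow> (a, -b, -c, -d))"

definition hinverse :: "quat \<Rightarrow> quat" where
  "hinverse q = (1 / (norm q)\<^sup>2) *\<^sub>R hcnj q"

definition hprod :: "quat list \<Rightarrow> quat" where
  "hprod qs = foldr hmult qs hone"

text \<open>Components are indexed 0..k-1 (the paper's 1..k).  A point of
  S^{m_1} x ... x S^{m_k} is p :: nat => (nat => real) x quat, where fst (p i) is the vector
  x_i in R^{m_i - 3} (coordinates 0..m_i-4, all other coordinates 0) and snd (p i) = q_i;
  p i = (0,0) for i >= k.  The topology is the (product) topology of the function space,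
  restricted to this set.\<close>

definition sphere_prod :: "nat \<Rightarrow> (nat \<Rightarrow> nat) \<Rightarrow> (nat \<Rightarrow> (nat \<Rightarrow> real) \<times> quat) set" where
  "sphere_prod k m = {p. (\<forall>i. k \<le> i \<longrightarrow> p i = ((\<lambda>_. 0), 0)) \<and>
      (\<forall>i<k. (\<forall>j. m i - 3 \<le> j \<longrightarrow> fst (p i) j = 0) \<and>
             (\<Sum>j<m i - 3. (fst (p i) j)\<^sup>2) + (norm (snd (p i)))\<^sup>2 = 1)}"

definition target_sphere :: "nat \<Rightarrow> (nat \<Rightarrow> nat) \<Rightarrow> ((nat \<Rightarrow> nat \<Rightarrow> real) \<times> quat) set" where
  "target_sphere k m = {y. (\<forall>i j. (k \<le> i \<or> m i - 3 \<le> j) \<longrightarrow> fst y i j = 0) \<and>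
      (\<Sum>i<k. \<Sum>j<m i - 3. (fst y i j)\<^sup>2) + (norm (snd y))\<^sup>2 = 1}"

definition qt_act :: "nat \<Rightarrow> (nat \<Rightarrow> quat) \<Rightarrow> (nat \<Rightarrow> (nat \<Rightarrow> real) \<times> quat) \<Rightarrow> (nat \<Rightarrow> (nat \<Rightarrow> real) \<times> quat)" where
  "qt_act k r p = (\<lambda>i. if i < k then
      (fst (p i), hmult (hmult (if i = 0 then hone else r (i - 1)) (snd (p i)))
                        (hinverse (if i = k - 1 then hone else r i)))
    else p i)"

definition unit_tuples :: "nat \<Rightarrow> (nat \<Rightarrow> quat) set" where
  "unit_tuples k = {r. \<forall>i<k - 1. norm (r i) = 1}"

definition orbit_proj :: "nat \<Rightarrow> (nat \<Rightarrow> nat) \<Rightarrow> (nat \<Rightarrow> (nat \<Rightarrow> real) \<times> quat) \<Rightarrow> (nat \<Rightarrow> nat \<Rightarrow> real) \<times> quat" where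
  "orbit_proj k m p =
    (let Q = hprod (map (\<lambda>i. snd (p i)) [0..<k]);
         N = sqrt ((\<Sum>i<k. \<Sum>j<m i - 3. (fst (p i) j)\<^sup>2) + (norm Q)\<^sup>2)
     in ((\<lambda>i j. fst (p i) j / N), (1 / N) *\<^sub>R Q))"

end

theory Submission
  imports Defs
begin

notation hmult (infixl "\<star>" 70)

lemma quat_norm_sq: "(norm ((a,b,c,d)::quat))\<^sup>2 = a\<^sup>2+b\<^sup>2+c\<^sup>2+d\<^sup>2"
  by (simp add: norm_Pair)

lemma hmult_assoc: "(p \<star> q) \<star> r = p \<star> (q \<star> r)"
  by (cases p rule: prod_cases4; cases q rule: prod_cases4; cases r rule: prod_cases4)
     (simp add: hmult_def algebra_simps)

lemma hmult_one[simp]: "hone \<star> p = p" "p \<star> hone = p"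
  by (cases p rule: prod_cases4; simp add: hmult_def hone_def)+

lemma hmult_zero[simp]: "0 \<star> p = 0" "p \<star> 0 = 0"
  by (cases p rule: prod_cases4; simp add: hmult_def zero_prod_def)+

lemma norm_hmult_sq: "(norm (p \<star> q))\<^sup>2 = (norm p)\<^sup>2 * (norm q)\<^sup>2"
proof (cases p rule: prod_cases4)
  case (fields a b c d)
  then show ?thesis proof (cases q rule: prod_cases4)
    case (fields e f g h)
    show ?thesis unfolding \<open>p = _\<close> \<open>q = _\<close> hmult_def
      by (simp only: prod.case quat_norm_sq) algebra
  qed
qed

lemma norm_hmult: "norm (p \<star> q) = norm p * norm q"
  by (metis norm_hmult_sq norm_ge_zero power_mult_distrib zero_le_mult_iff power2_eq_imp_eq)

lemma hmult_eq_0_iff[simp]: "p \<star> q = 0 \<longleftrightarrow> p = 0 \<or> q = 0"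
  by (metis norm_eq_zero norm_hmult mult_eq_0_iff)

lemma hmult_scaleR1: "(c *\<^sub>R p) \<star> q = c *\<^sub>R (p \<star> q)"
proof (cases p rule: prod_cases4)
  case (fields a b c d)
  then show ?thesis proof (cases q rule: prod_cases4)
    case (fields e f g h)
    show ?thesis unfolding \<open>p = _\<close> \<open>q = _\<close> hmult_def
      by (simp add: algebra_simps)
  qed
qed
lemma hmult_scaleR2: "p \<star> (c *\<^sub>R q) = c *\<^sub>R (p \<star> q)"
proof (cases p rule: prod_cases4)
  case (fields a b c d)
  then show ?thesis proof (cases q rule: prod_cases4)
    case (fields e f g h)
    show ?thesis unfolding \<open>p = _\<close> \<open>q = _\<close> hmult_def
      by (simp add: algebra_simps)
  qed
qed
lemma hmult_hcnj1: "p \<star> hcnj p = (norm p)\<^sup>2 *\<^sub>R hone"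
proof (cases p rule: prod_cases4)
  case (fields a b c d)
  show ?thesis unfolding \<open>p = _\<close> hmult_def hcnj_def hone_def quat_norm_sq
      by (simp add: algebra_simps power2_eq_square)
qed
lemma hmult_hcnj2: "hcnj p \<star> p = (norm p)\<^sup>2 *\<^sub>R hone"
proof (cases p rule: prod_cases4)
  case (fields a b c d)
  show ?thesis unfolding \<open>p = _\<close> hmult_def hcnj_def hone_def quat_norm_sq
      by (simp add: algebra_simps power2_eq_square)
qed
lemmas hmult_scaleR[simp] = hmult_scaleR1 hmult_scaleR2
lemmas hmult_hcnj = hmult_hcnj1 hmult_hcnj2

lemma hcnj_hmult: "hcnj (p \<star> q) = hcnj q \<star> hcnj p"
  by (cases p rule: prod_cases4; cases q rule: prod_cases4; simp add: hmult_def hcnj_def algebra_simps)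

lemma norm_hcnj[simp]: "norm (hcnj p) = norm p"
  by (cases p rule: prod_cases4; simp add: hcnj_def norm_Pair)

lemma hone_nz[simp]: "hone \<noteq> 0" and norm_hone[simp]: "norm hone = 1"
  by (auto simp: hone_def zero_prod_def norm_Pair)

lemma hinverse_right[simp]: "p \<noteq> 0 \<Longrightarrow> p \<star> hinverse p = hone"
  and hinverse_left[simp]: "p \<noteq> 0 \<Longrightarrow> hinverse p \<star> p = hone"
  by (auto simp: hinverse_def hmult_hcnj)

lemma hinverse_hmult: "hinverse (p \<star> q) = hinverse q \<star> hinverse p"
  by (simp add: hinverse_def hcnj_hmult norm_hmult power_mult_distrib)

lemma norm_hinverse[simp]: "norm (hinverse p) = 1 / norm p"
  by (simp add: hinverse_def power2_eq_square)

lemma hinverse_one[simp]: "hinverse hone = hone"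
  by (simp add: hinverse_def hcnj_def hone_def norm_Pair)

lemma hinverse_nz_iff[simp]: "hinverse p = 0 \<longleftrightarrow> p = 0"
  by (metis norm_hinverse norm_eq_zero divide_eq_0_iff one_neq_zero)

lemma hcancel[simp]:
  "p \<noteq> 0 \<Longrightarrow> hinverse p \<star> (p \<star> x) = x"
  "p \<noteq> 0 \<Longrightarrow> p \<star> (hinverse p \<star> x) = x"
  "p \<noteq> 0 \<Longrightarrow> x \<star> p \<star> hinverse p = x"
  "p \<noteq> 0 \<Longrightarrow> x \<star> hinverse p \<star> p = x"
  by (simp_all add: hmult_assoc[symmetric]) (simp_all add: hmult_assoc)

lemma hprod_simps[simp]: "hprod [] = hone" "hprod (x#xs) = x \<star> hprod xs"
  by (simp_all add: hprod_def)

lemma hprod_append: "hprod (xs @ ys) = hprod xs \<star> hprod ys"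
  by (induction xs) (auto simp: hmult_assoc)

lemma norm_hprod: "norm (hprod xs) = prod_list (map norm xs)"
  by (induction xs) (auto simp: norm_hmult)

lemma norm_hprod_upt: "norm (hprod (map f [a..<b])) = (\<Prod>i\<in>{a..<b}. norm (f i))"
  by (simp add: norm_hprod prod.distinct_set_conv_list[symmetric])

lemma hprod_zero_iff: "hprod xs = 0 \<longleftrightarrow> (0::quat) \<in> set xs"
  by (induction xs) auto

lemma hinverse_hinverse[simp]: "hinverse (hinverse p) = p"
proof (cases "p = 0")
  case True then show ?thesis by (simp add: hinverse_def hcnj_def zero_prod_def)
next
  case False
  have "hcnj (hcnj p) = p" by (cases p rule: prod_cases4) (simp add: hcnj_def)
  moreover have "hcnj (c *\<^sub>R x) = c *\<^sub>R hcnj x" for c x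
    by (cases x rule: prod_cases4) (simp add: hcnj_def)
  ultimately show ?thesis using False
    by (simp add: hinverse_def norm_hinverse power2_eq_square)
qed

lemma telescope:
  assumes "\<forall>i. a i \<noteq> 0"
  shows "hprod (map (\<lambda>i. a i \<star> q i \<star> hinverse (a (Suc i))) [s..<s+n])
       = a s \<star> hprod (map q [s..<s+n]) \<star> hinverse (a (s+n))"
proof (induction n)
  case 0 then show ?case using assms by simp
next
  case (Suc n)
  have "hprod (map (\<lambda>i. a i \<star> q i \<star> hinverse (a (Suc i))) [s..<s+Suc n])
     = hprod (map (\<lambda>i. a i \<star> q i \<star> hinverse (a (Suc i))) [s..<s+n]) \<star>
       (a (s+n) \<star> q (s+n) \<star> hinverse (a (Suc (s+n))))"
    by (simp add: hprod_append)
  also have "\<dots> = a s \<star> hprod (map q [s..<s+Suc n]) \<star> hinverse (a (s+Suc n))"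
    using Suc assms by (simp add: hprod_append hmult_assoc)
  finally show ?case .
qed

lemma R_step:
  fixes q q' :: "nat \<Rightarrow> quat"
  assumes "i < k" "\<forall>l. i \<le> l \<and> l < k \<longrightarrow> q l \<noteq> 0" "\<forall>l<k. norm (q' l) = norm (q l)"
  shows "q' i = (hprod (map q' [i..<k]) \<star> hinverse (hprod (map q [i..<k]))) \<star> q i
     \<star> hinverse (hprod (map q' [Suc i..<k]) \<star> hinverse (hprod (map q [Suc i..<k])))"
proof -
  have e1: "[i..<k] = i # [Suc i..<k]" using assms(1) by (simp add: upt_conv_Cons)
  have nz: "hprod (map q [Suc i..<k]) \<noteq> 0" using assms(2) by (auto simp: hprod_zero_iff)
  have nz': "hprod (map q' [Suc i..<k]) \<noteq> 0" using assms(2,3)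
    by (auto simp: hprod_zero_iff)
  have qi: "q i \<noteq> 0" using assms by auto
  show ?thesis unfolding e1 using nz nz' qi
    by (simp add: hinverse_hmult hmult_assoc)
qed

lemma R_norm:
  fixes q q' :: "nat \<Rightarrow> quat"
  assumes "\<forall>l. i \<le> l \<and> l < k \<longrightarrow> q l \<noteq> 0" "\<forall>l<k. norm (q' l) = norm (q l)"
  shows "norm (hprod (map q' [i..<k]) \<star> hinverse (hprod (map q [i..<k]))) = 1"
proof -
  have "norm (hprod (map q' [i..<k])) = norm (hprod (map q [i..<k]))"
    unfolding norm_hprod_upt using assms(2) by (intro prod.cong) auto
  moreover have "hprod (map q [i..<k]) \<noteq> 0" using assms(1) by (auto simp: hprod_zero_iff)
  ultimately show ?thesis by (simp add: norm_hmult)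
qed

primrec Lg :: "(nat \<Rightarrow> quat) \<Rightarrow> (nat \<Rightarrow> quat) \<Rightarrow> nat \<Rightarrow> quat" where
  "Lg q q' 0 = hone"
| "Lg q q' (Suc i) = (if q i = 0 then hone else hinverse (q' i) \<star> Lg q q' i \<star> q i)"

lemma Lg_norm:
  assumes "\<forall>l<i. norm (q' l) = norm (q l)"
  shows "norm (Lg q q' i) = 1"
  using assms by (induction i) (auto simp: norm_hmult)

lemma Lg_step:
  assumes "norm (q' i) = norm (q i)" "Lg q q' i \<noteq> 0"
  shows "q' i = Lg q q' i \<star> q i \<star> hinverse (Lg q q' (Suc i))"
proof (cases "q i = 0")
  case True then show ?thesis using assms by simp
next
  case False
  then have "q' i \<noteq> 0" using assms by (metis norm_eq_zero)
  then show ?thesis using False assms by (simp add: hinverse_hmult hmult_assoc)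
qed

lemma exists_a:
  fixes q q' :: "nat \<Rightarrow> quat"
  assumes nq: "\<forall>l<k. norm (q' l) = norm (q l)"
    and hp: "hprod (map q' [0..<k]) = hprod (map q [0..<k])"
  shows "\<exists>a. a 0 = hone \<and> a k = hone \<and> (\<forall>i. norm (a i) = 1)
     \<and> (\<forall>i<k. q' i = a i \<star> q i \<star> hinverse (a (Suc i)))"
proof -
  define R where "R i = hprod (map q' [i..<k]) \<star> hinverse (hprod (map q [i..<k]))" for i
  have Rk: "R k = hone" by (simp add: R_def)
  show ?thesis
  proof (cases "\<forall>l<k. q l \<noteq> 0")
    case True
    define a where "a i = (if k \<le> i then hone else R i)" for i
    have "a 0 = hone"
    proof (cases "k = 0")
      case False
      have "hprod (map q [0..<k]) \<noteq> 0" using True by (auto simp: hprod_zero_iff)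
      then show ?thesis using False by (simp add: a_def R_def hp)
    qed (simp add: a_def)
    moreover have "a k = hone" by (simp add: a_def)
    moreover have "\<forall>i. norm (a i) = 1"
      using R_norm[of _ k q q'] True nq by (auto simp: a_def R_def)
    moreover have "\<forall>i<k. q' i = a i \<star> q i \<star> hinverse (a (Suc i))"
    proof (intro allI impI)
      fix i assume i: "i < k"
      have "q' i = R i \<star> q i \<star> hinverse (R (Suc i))"
        unfolding R_def by (rule R_step) (use i True nq in auto)
      then show "q' i = a i \<star> q i \<star> hinverse (a (Suc i))"
        using i Rk by (cases "Suc i = k") (auto simp: a_def)
    qed
    ultimately show ?thesis by blast
  next
    case False
    define Z where "Z = {l. l < k \<and> q l = 0}"
    have Zne: "Z \<noteq> {}" and Zf: "finite Z" using False by (auto simp: Z_def)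
    define j where "j = Max Z"
    have jZ: "j \<in> Z" using Zne Zf by (simp add: j_def)
    have jk: "j < k" and qj: "q j = 0" using jZ by (auto simp: Z_def)
    have after: "\<forall>l. j < l \<and> l < k \<longrightarrow> q l \<noteq> 0"
      using Zf j_def Max_ge Z_def by (metis (mono_tags, lifting) leD mem_Collect_eq)
    define a where "a i = (if k \<le> i then hone else if i \<le> j then Lg q q' i else R i)" for i
    have LgN: "norm (Lg q q' i) = 1" if "i \<le> k" for i
      by (rule Lg_norm) (use nq that in auto)
    have "a 0 = hone" using jk by (simp add: a_def)
    moreover have "a k = hone" by (simp add: a_def)
    moreover have "\<forall>i. norm (a i) = 1"
    proof
      fix i show "norm (a i) = 1"
        using LgN[of i] R_norm[of i k q q'] after nq jk
        by (auto simp: a_def R_def)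
    qed
    moreover have "\<forall>i<k. q' i = a i \<star> q i \<star> hinverse (a (Suc i))"
    proof (intro allI impI)
      fix i assume i: "i < k"
      show "q' i = a i \<star> q i \<star> hinverse (a (Suc i))"
      proof (cases "i < j")
        case True
        have "q' i = Lg q q' i \<star> q i \<star> hinverse (Lg q q' (Suc i))"
          by (rule Lg_step) (use nq i LgN[of i] in auto)
        then show ?thesis using True i jk by (simp add: a_def)
      next
        case False
        show ?thesis
        proof (cases "i = j")
          case True
          then have "q' i = 0" using qj nq i by (metis norm_eq_zero)
          then show ?thesis using True qj by simp
        next
          case False
          then have ji: "j < i" using \<open>\<not> i < j\<close> by simp
          have "q' i = R i \<star> q i \<star> hinverse (R (Suc i))"
            unfolding R_def by (rule R_step) (use i ji after nq in auto)
          then show ?thesis using i ji Rk by (cases "Suc i = k") (auto simp: a_def)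
        qed
      qed
    qed
    ultimately show ?thesis by blast
  qed
qed
definition Asq :: "(nat \<Rightarrow> nat) \<Rightarrow> (nat \<Rightarrow> (nat \<Rightarrow> real) \<times> quat) \<Rightarrow> nat \<Rightarrow> real" where
  "Asq m p i = (\<Sum>j<m i - 3. (fst (p i) j)\<^sup>2)"
definition Qof :: "nat \<Rightarrow> (nat \<Rightarrow> (nat \<Rightarrow> real) \<times> quat) \<Rightarrow> quat" where
  "Qof k p = hprod (map (\<lambda>i. snd (p i)) [0..<k])"
definition Nof :: "nat \<Rightarrow> (nat \<Rightarrow> nat) \<Rightarrow> (nat \<Rightarrow> (nat \<Rightarrow> real) \<times> quat) \<Rightarrow> real" where
  "Nof k m p = sqrt ((\<Sum>i<k. Asq m p i) + (norm (Qof k p))\<^sup>2)"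

lemma orbit_proj_alt: "orbit_proj k m p = ((\<lambda>i j. fst (p i) j / Nof k m p), (1 / Nof k m p) *\<^sub>R Qof k p)"
  by (simp add: orbit_proj_def Nof_def Qof_def Asq_def Let_def)

lemma sp_eq: "p \<in> sphere_prod k m \<Longrightarrow> i < k \<Longrightarrow> Asq m p i + (norm (snd (p i)))\<^sup>2 = 1"
  and sp_out: "p \<in> sphere_prod k m \<Longrightarrow> k \<le> i \<Longrightarrow> p i = ((\<lambda>_. 0), 0)"
  and sp_zero: "p \<in> sphere_prod k m \<Longrightarrow> i < k \<Longrightarrow> m i - 3 \<le> j \<Longrightarrow> fst (p i) j = 0"
  by (auto simp: sphere_prod_def Asq_def)

lemma Asq_nonneg: "0 \<le> Asq m p i"
  by (simp add: Asq_def sum_nonneg)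

lemma norm_Qof: "norm (Qof k p) = (\<Prod>i<k. norm (snd (p i)))"
  by (simp add: Qof_def norm_hprod_upt atLeast0LessThan)

lemma N_pos: assumes "p \<in> sphere_prod k m" shows "0 < Nof k m p"
proof (rule ccontr)
  assume "\<not> 0 < Nof k m p"
  then have z: "(\<Sum>i<k. Asq m p i) + (norm (Qof k p))\<^sup>2 \<le> 0"
    by (simp add: Nof_def)
  have s0: "(\<Sum>i<k. Asq m p i) = 0" and "(norm (Qof k p))\<^sup>2 = 0"
    using z Asq_nonneg[of m p] sum_nonneg[of "{..<k}" "Asq m p"]
    by (smt (verit) zero_le_power2)+
  then have q0: "norm (Qof k p) = 0" by simp
  have "\<forall>i\<in>{..<k}. Asq m p i = 0"
    using s0 by (subst (asm) sum_nonneg_eq_0_iff) (auto simp: Asq_nonneg)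
  then have "\<forall>i<k. norm (snd (p i)) = 1"
  proof (intro allI impI)
    fix i assume i: "i < k"
    then have "(norm (snd (p i)))\<^sup>2 = 1" using sp_eq[OF assms i] \<open>\<forall>i\<in>{..<k}. Asq m p i = 0\<close> by simp
    then show "norm (snd (p i)) = 1" using norm_ge_zero[of "snd (p i)"] by (auto simp: power2_eq_1_iff)
  qed
  then have "norm (Qof k p) = 1" by (simp add: norm_Qof)
  then show False using q0 by simp
qed

lemma Asq_scale: "(\<forall>j. fst (p' i) j = c * fst (p i) j) \<Longrightarrow> Asq m p' i = c\<^sup>2 * Asq m p i"
  by (simp add: Asq_def sum_distrib_left power_mult_distrib)

lemma c_le_1:
  assumes p: "p \<in> sphere_prod k m" and p': "p' \<in> sphere_prod k m" and c: "0 < c"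
    and x: "\<forall>i<k. \<forall>j. fst (p' i) j = c * fst (p i) j"
    and Q: "Qof k p' = c *\<^sub>R Qof k p"
  shows "c \<le> 1"
proof (rule ccontr)
  assume "\<not> c \<le> 1"
  then have c1: "1 < c" by simp
  then have c2: "1 < c\<^sup>2" by (simp add: one_less_power)
  have A': "\<And>i. i < k \<Longrightarrow> Asq m p' i = c\<^sup>2 * Asq m p i" by (rule Asq_scale) (use x in auto)
  show False
  proof (cases "Qof k p = 0")
    case True
    then obtain i where i: "i < k" "snd (p i) = 0"
      by (auto simp: Qof_def hprod_zero_iff)
    then have "Asq m p i = 1" using sp_eq[OF p i(1)] by simp
    then have "Asq m p' i = c\<^sup>2" using A' i by simp
    then show False using sp_eq[OF p' i(1)] c2 zero_le_power2[of "norm (snd (p' i))"] by linarith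
  next
    case False
    note Qnz = this
    have le: "norm (snd (p' i)) \<le> norm (snd (p i))" if i: "i < k" for i
    proof -
      have "(norm (snd (p' i)))\<^sup>2 \<le> (norm (snd (p i)))\<^sup>2"
        using sp_eq[OF p i] sp_eq[OF p' i] A'[OF i] mult_right_mono[of 1 "c\<^sup>2" "Asq m p i"] Asq_nonneg[of m p i] c2
        by linarith
      then show ?thesis by (rule power2_le_imp_le[OF _ norm_ge_zero])
    qed
    have "norm (Qof k p') \<le> norm (Qof k p)"
      unfolding norm_Qof by (rule prod_mono) (use le in auto)
    moreover have "norm (Qof k p') = c * norm (Qof k p)" using Q c by simp
    moreover have "0 < norm (Qof k p)" using Qnz by simp
    ultimately show False using c1 mult_strict_right_mono[of 1 c "norm (Qof k p)"] by linarith
  qed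
qed
lemma fibre_bwd:
  assumes r: "r \<in> unit_tuples k"
  shows "orbit_proj k m (qt_act k r p) = orbit_proj k m p"
proof -
  define a where "a i = (if i = 0 \<or> k \<le> i then hone else r (i - 1))" for i
  have anz: "\<forall>i. a i \<noteq> 0"
  proof
    fix i
    show "a i \<noteq> 0"
    proof (cases "i = 0 \<or> k \<le> i")
      case False
      then have "norm (r (i - 1)) = 1" using r by (auto simp: unit_tuples_def)
      then show ?thesis using False by (auto simp: a_def)
    qed (auto simp: a_def)
  qed
  have fst_eq: "fst (qt_act k r p i) = fst (p i)" for i
    by (simp add: qt_act_def)
  have snd_eq: "snd (qt_act k r p i) = a i \<star> snd (p i) \<star> hinverse (a (Suc i))" if "i < k" for i
  proof -
    have "(if i = k - 1 then hone else r i) = a (Suc i)"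
      using that by (auto simp: a_def)
    moreover have "(if i = 0 then hone else r (i - 1)) = a i"
      using that by (auto simp: a_def)
    ultimately show ?thesis using that by (simp add: qt_act_def)
  qed
  have "Qof k (qt_act k r p) = hprod (map (\<lambda>i. a i \<star> snd (p i) \<star> hinverse (a (Suc i))) [0..<0+k])"
    unfolding Qof_def by (intro arg_cong[where f=hprod] map_cong) (auto simp: snd_eq)
  also have "\<dots> = a 0 \<star> hprod (map (\<lambda>i. snd (p i)) [0..<0+k]) \<star> hinverse (a (0+k))"
    by (rule telescope[OF anz])
  also have "\<dots> = Qof k p" by (simp add: a_def Qof_def)
  finally have Q: "Qof k (qt_act k r p) = Qof k p" .
  have A: "Asq m (qt_act k r p) i = Asq m p i" for i
    by (simp add: Asq_def fst_eq)
  show ?thesis unfolding orbit_proj_alt Nof_def Q A fst_eq ..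
qed

lemma fibre_fwd:
  assumes p: "p \<in> sphere_prod k m" and p': "p' \<in> sphere_prod k m"
    and eq: "orbit_proj k m p = orbit_proj k m p'"
  shows "\<exists>r\<in>unit_tuples k. p' = qt_act k r p"
proof -
  define N where "N = Nof k m p"
  define N' where "N' = Nof k m p'"
  have N: "0 < N" and N': "0 < N'" using N_pos p p' by (auto simp: N_def N'_def)
  have e1: "fst (p i) j / N = fst (p' i) j / N'" for i j
    using fun_cong[OF fun_cong[OF arg_cong[OF eq, of fst]], of i j]
    by (simp add: orbit_proj_alt N_def N'_def)
  have e2: "(1 / N) *\<^sub>R Qof k p = (1 / N') *\<^sub>R Qof k p'"
    using arg_cong[OF eq, of snd] by (simp add: orbit_proj_alt N_def N'_def)
  have h1: "fst (p' i) j = (N' / N) * fst (p i) j" for i j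
    using e1[of i j] N N' by (simp add: field_simps)
  have h1': "fst (p i) j = (N / N') * fst (p' i) j" for i j
    using e1[of i j] N N' by (simp add: field_simps)
  have h2: "Qof k p' = (N' / N) *\<^sub>R Qof k p"
  proof -
    have "Qof k p' = N' *\<^sub>R ((1 / N') *\<^sub>R Qof k p')" using N' by simp
    also have "\<dots> = N' *\<^sub>R ((1 / N) *\<^sub>R Qof k p)" by (simp only: e2)
    also have "\<dots> = (N' / N) *\<^sub>R Qof k p" by simp
    finally show ?thesis .
  qed
  have h2': "Qof k p = (N / N') *\<^sub>R Qof k p'"
  proof -
    have "Qof k p = N *\<^sub>R ((1 / N) *\<^sub>R Qof k p)" using N by simp
    also have "\<dots> = N *\<^sub>R ((1 / N') *\<^sub>R Qof k p')" by (simp only: e2)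
    also have "\<dots> = (N / N') *\<^sub>R Qof k p'" by simp
    finally show ?thesis .
  qed
  have c1: "N' / N \<le> 1" by (rule c_le_1[OF p p']) (use N N' h1 h2 in auto)
  have c2: "N / N' \<le> 1" by (rule c_le_1[OF p' p]) (use N N' h1' h2' in auto)
  have NN: "N' = N" using c1 c2 N N' by (simp add: divide_le_eq_1)
  have fstq: "fst (p' i) = fst (p i)" for i
    using h1 NN N by auto
  have Qeq: "Qof k p' = Qof k p" using h2 NN N by simp
  have nq: "\<forall>l<k. norm (snd (p' l)) = norm (snd (p l))"
  proof (intro allI impI)
    fix l assume l: "l < k"
    have "Asq m p' l = Asq m p l" by (simp add: Asq_def fstq)
    then have "(norm (snd (p' l)))\<^sup>2 = (norm (snd (p l)))\<^sup>2"
      using sp_eq[OF p l] sp_eq[OF p' l] by linarith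
    then show "norm (snd (p' l)) = norm (snd (p l))"
      by (rule power2_eq_imp_eq) simp_all
  qed
  have hp: "hprod (map (\<lambda>i. snd (p' i)) [0..<k]) = hprod (map (\<lambda>i. snd (p i)) [0..<k])"
    using Qeq by (simp add: Qof_def)
  obtain a where a0: "a 0 = hone" and ak: "a k = hone" and an: "\<forall>i. norm (a i) = 1"
    and aq: "\<forall>i<k. snd (p' i) = a i \<star> snd (p i) \<star> hinverse (a (Suc i))"
    using exists_a[OF nq hp] by blast
  define r where "r i = a (Suc i)" for i
  have "r \<in> unit_tuples k" using an by (simp add: unit_tuples_def r_def)
  moreover have "p' = qt_act k r p"
  proof
    fix i
    show "p' i = qt_act k r p i"
    proof (cases "i < k")
      case True
      have "(if i = k - 1 then hone else r i) = a (Suc i)"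
        using True ak by (auto simp: r_def)
      moreover have "(if i = 0 then hone else r (i - 1)) = a i"
        using True a0 by (auto simp: r_def)
      ultimately have s: "snd (p' i) = (if i = 0 then hone else r (i - 1)) \<star> snd (p i)
          \<star> hinverse (if i = k - 1 then hone else r i)"
        using True aq by simp
      have "qt_act k r p i = (fst (p' i), snd (p' i))"
        using True unfolding qt_act_def by (simp only: s fstq if_True)
      then show ?thesis by simp
    next
      case False
      then show ?thesis using sp_out[OF p] sp_out[OF p'] by (simp add: qt_act_def)
    qed
  qed
  ultimately show ?thesis by blast
qed
lemma img_sub:
  assumes p: "p \<in> sphere_prod k m"
  shows "orbit_proj k m p \<in> target_sphere k m"
proof -
  define N where "N = Nof k m p"
  have N: "0 < N" using N_pos[OF p] by (simp add: N_def)
  have N2: "N\<^sup>2 = (\<Sum>i<k. Asq m p i) + (norm (Qof k p))\<^sup>2"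
    unfolding N_def Nof_def by (rule real_sqrt_pow2) (simp add: sum_nonneg Asq_nonneg)
  have z: "fst (p i) j = 0" if "k \<le> i \<or> m i - 3 \<le> j" for i j
    using that sp_out[OF p] sp_zero[OF p] by (cases "k \<le> i") auto
  have "(\<Sum>i<k. \<Sum>j<m i - 3. (fst (p i) j / N)\<^sup>2) + (norm ((1 / N) *\<^sub>R Qof k p))\<^sup>2
      = ((\<Sum>i<k. Asq m p i) + (norm (Qof k p))\<^sup>2) / N\<^sup>2"
    by (simp add: Asq_def power_divide sum_divide_distrib add_divide_distrib power_mult_distrib)
  also have "\<dots> = 1" by (subst N2[symmetric]) (use N in simp)
  finally show ?thesis
    unfolding target_sphere_def orbit_proj_alt N_def[symmetric] using z by auto
qed

lemma hprod_scal: "hprod (map (\<lambda>i. c i *\<^sub>R hone) [0..<n]) = (\<Prod>i<n. c i) *\<^sub>R hone"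
  by (induction n) (simp_all add: hprod_append mult.commute)

lemma exists_t:
  fixes a :: "nat \<Rightarrow> real" and Y :: quat
  assumes an: "\<forall>i. 0 \<le> a i" and s: "(\<Sum>i<k. a i) + (norm Y)\<^sup>2 = 1"
  shows "\<exists>t>0. (\<forall>i<k. t\<^sup>2 * a i \<le> 1) \<and> t * norm Y = (\<Prod>i<k. sqrt (1 - t\<^sup>2 * a i))"
proof (cases "\<forall>i<k. a i = 0")
  case True
  then have "(norm Y)\<^sup>2 = 1" using s by simp
  then have "norm Y = 1" using norm_ge_zero[of Y] by (auto simp: power2_eq_1_iff)
  then show ?thesis using True by (intro exI[of _ 1]) simp
next
  case False
  then obtain i0 where i0: "i0 < k" "a i0 \<noteq> 0" by blast
  define M where "M = Max (a ` {..<k})"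
  have aM: "a i \<le> M" if "i < k" for i using that by (simp add: M_def)
  have Mi: "M \<in> a ` {..<k}" unfolding M_def using i0 by (intro Max_in) auto
  then obtain i1 where i1: "i1 < k" "a i1 = M" by auto
  have Mpos: "0 < M" using aM[OF i0(1)] i0(2) an by (metis less_eq_real_def order.strict_trans2)
  define T where "T = 1 / sqrt M"
  have T: "0 < T" using Mpos by (simp add: T_def)
  have T2: "T\<^sup>2 = 1 / M" using Mpos by (simp add: T_def power_divide)
  have bound: "t\<^sup>2 * a i \<le> 1" if "0 \<le> t" "t \<le> T" "i < k" for t i
  proof -
    have "t\<^sup>2 \<le> T\<^sup>2" using that by (simp add: power_mono)
    then have "t\<^sup>2 * a i \<le> T\<^sup>2 * M" using aM[OF that(3)] an
      by (meson mult_mono zero_le_power2 order_trans)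
    then show ?thesis using T2 Mpos by simp
  qed
  define g where "g t = t * norm Y - (\<Prod>i<k. sqrt (1 - t\<^sup>2 * a i))" for t
  have g0: "g 0 = -1" by (simp add: g_def)
  have P0: "(\<Prod>i<k. sqrt (1 - T\<^sup>2 * a i)) = 0"
    using i1 T2 Mpos by (intro prod_zero) auto
  have gT: "0 \<le> g T" using T by (simp add: g_def P0)
  have "continuous_on {0..T} g" unfolding g_def by (intro continuous_intros)
  then obtain t where t: "0 \<le> t" "t \<le> T" "g t = 0"
    using IVT'[of g 0 0 T] g0 gT T by auto
  have "t \<noteq> 0" using t g0 by auto
  then show ?thesis using t bound by (intro exI[of _ t]) (auto simp: g_def)
qed

lemma img_sup:
  assumes y: "y \<in> target_sphere k m" and k: "1 \<le> k"
  shows "\<exists>p\<in>sphere_prod k m. orbit_proj k m p = y"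
proof -
  define a where "a i = (\<Sum>j<m i - 3. (fst y i j)\<^sup>2)" for i
  define Y where "Y = snd y"
  have yz: "fst y i j = 0" if "k \<le> i \<or> m i - 3 \<le> j" for i j
    using y that unfolding target_sphere_def by blast
  have an: "\<forall>i. 0 \<le> a i" by (simp add: a_def sum_nonneg)
  have s: "(\<Sum>i<k. a i) + (norm Y)\<^sup>2 = 1" using y by (simp add: target_sphere_def a_def Y_def)
  obtain t where t: "0 < t" and tb: "\<forall>i<k. t\<^sup>2 * a i \<le> 1"
    and tp: "t * norm Y = (\<Prod>i<k. sqrt (1 - t\<^sup>2 * a i))"
    using exists_t[OF an s] by blast
  define sv where "sv i = sqrt (1 - t\<^sup>2 * a i)" for i
  have sv0: "0 \<le> sv i" if "i < k" for i using tb that by (simp add: sv_def)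
  have sv2: "(sv i)\<^sup>2 = 1 - t\<^sup>2 * a i" if "i < k" for i using tb that by (simp add: sv_def)
  define qv where "qv i = (if i = k - 1 \<and> Y \<noteq> 0 then (sv i / norm Y) *\<^sub>R Y else sv i *\<^sub>R hone)" for i
  define p where "p i = (if i < k then ((\<lambda>j. t * fst y i j), qv i) else ((\<lambda>_. 0), 0))" for i
  have nqv: "norm (qv i) = sv i" if "i < k" for i
    using sv0[OF that] by (auto simp: qv_def)
  have Asqp: "Asq m p i = t\<^sup>2 * a i" if "i < k" for i
    using that by (simp add: Asq_def p_def a_def power_mult_distrib sum_distrib_left)
  have pS: "p \<in> sphere_prod k m"
    unfolding sphere_prod_def
  proof (intro CollectI conjI allI impI)
    fix i assume "k \<le> i" then show "p i = ((\<lambda>_. 0), 0)" by (simp add: p_def)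
  next
    fix i j assume "i < k" "m i - 3 \<le> j"
    then show "fst (p i) j = 0" using yz by (simp add: p_def)
  next
    fix i assume i: "i < k"
    have "(\<Sum>j<m i - 3. (fst (p i) j)\<^sup>2) = t\<^sup>2 * a i" using Asqp[OF i] by (simp add: Asq_def)
    moreover have "(norm (snd (p i)))\<^sup>2 = 1 - t\<^sup>2 * a i"
      using i nqv[OF i] sv2[OF i] by (simp add: p_def)
    ultimately show "(\<Sum>j<m i - 3. (fst (p i) j)\<^sup>2) + (norm (snd (p i)))\<^sup>2 = 1" by simp
  qed
  have Qp: "Qof k p = t *\<^sub>R Y"
  proof -
    obtain n where n: "k = Suc n" using k by (cases k) auto
    have me: "map (\<lambda>i. snd (p i)) [0..<n] = map (\<lambda>i. sv i *\<^sub>R hone) [0..<n]"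
      by (intro map_cong) (auto simp: p_def qv_def n)
    have "Qof k p = hprod (map (\<lambda>i. snd (p i)) [0..<n]) \<star> snd (p n)"
      unfolding Qof_def n by (simp add: hprod_append)
    also have "\<dots> = hprod (map (\<lambda>i. sv i *\<^sub>R hone) [0..<n]) \<star> qv n"
      unfolding me by (simp add: p_def n)
    also have "\<dots> = (\<Prod>i<n. sv i) *\<^sub>R qv n" by (simp add: hprod_scal)
    also have "\<dots> = t *\<^sub>R Y"
    proof (cases "Y = 0")
      case True
      have "(\<Prod>i<k. sv i) = 0" using tp True by (simp add: sv_def)
      then have "(\<Prod>i<n. sv i) * sv n = 0" by (simp add: n)
      then show ?thesis using True by (simp add: qv_def)
    next
      case False
      have "(\<Prod>i<n. sv i) * sv n = t * norm Y" using tp by (simp add: sv_def n)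
      then show ?thesis using False n by (simp add: qv_def)
    qed
    finally show ?thesis .
  qed
  have Np: "Nof k m p = t"
  proof -
    have "(\<Sum>i<k. Asq m p i) + (norm (Qof k p))\<^sup>2 = t\<^sup>2 * ((\<Sum>i<k. a i) + (norm Y)\<^sup>2)"
      by (simp add: Asqp Qp sum_distrib_left sum_distrib_right algebra_simps power_mult_distrib)
    then show ?thesis using s t by (simp add: Nof_def)
  qed
  have "orbit_proj k m p = y"
  proof -
    have "(\<lambda>i j. fst (p i) j / t) = fst y"
    proof (intro ext)
      fix i j show "fst (p i) j / t = fst y i j"
        using t yz[of i j] by (simp add: p_def)
    qed
    moreover have "(1 / t) *\<^sub>R Qof k p = snd y" using t by (simp add: Qp Y_def)
    ultimately show ?thesis by (simp add: orbit_proj_alt Np)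
  qed
  then show ?thesis using pS by blast
qed
lemma hmult_alt: "p \<star> q =
  (fst p * fst q - fst (snd p) * fst (snd q) - fst (snd (snd p)) * fst (snd (snd q)) - snd (snd (snd p)) * snd (snd (snd q)),
   fst p * fst (snd q) + fst (snd p) * fst q + fst (snd (snd p)) * snd (snd (snd q)) - snd (snd (snd p)) * fst (snd (snd q)),
   fst p * fst (snd (snd q)) - fst (snd p) * snd (snd (snd q)) + fst (snd (snd p)) * fst q + snd (snd (snd p)) * fst (snd q),
   fst p * snd (snd (snd q)) + fst (snd p) * fst (snd (snd q)) - fst (snd (snd p)) * fst (snd q) + snd (snd (snd p)) * fst q)"
  by (cases p rule: prod_cases4; cases q rule: prod_cases4) (simp add: hmult_def)

lemma continuous_on_hmult [continuous_intros]:
  assumes "continuous_on S f" "continuous_on S g"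
  shows "continuous_on S (\<lambda>x. f x \<star> g x)"
  unfolding hmult_alt by (intro continuous_intros assms)

lemma continuous_on_hprod [continuous_intros]:
  assumes "\<And>i. i \<in> set xs \<Longrightarrow> continuous_on S (f i)"
  shows "continuous_on S (\<lambda>x. hprod (map (\<lambda>i. f i x) xs))"
  using assms by (induction xs) (auto intro!: continuous_intros)

lemma continuous_on_coord [continuous_intros]:
  "continuous_on S (\<lambda>p::nat \<Rightarrow> 'b::topological_space. p i)"
  by (rule continuous_on_subset[OF continuous_on_product_coordinates]) simp

lemma continuous_on_coord2 [continuous_intros]:
  "continuous_on S (\<lambda>p::nat \<Rightarrow> (nat \<Rightarrow> real) \<times> quat. fst (p i) j)"
  by (rule continuous_on_product_then_coordinatewise) (intro continuous_intros)

lemma cont_proj: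
  "continuous_on (sphere_prod k m) (orbit_proj k m)"
proof -
  have N: "continuous_on (sphere_prod k m) (Nof k m)"
    unfolding Nof_def Asq_def Qof_def by (intro continuous_intros)
  have Nz: "\<forall>p\<in>sphere_prod k m. Nof k m p \<noteq> 0" using N_pos by force
  have e: "orbit_proj k m = (\<lambda>p. ((\<lambda>i j. fst (p i) j / Nof k m p), (1 / Nof k m p) *\<^sub>R Qof k p))"
    by (rule ext) (simp add: orbit_proj_alt)
  show ?thesis unfolding e
    apply (intro continuous_on_Pair continuous_on_coordinatewise_then_product continuous_on_divide
        continuous_on_scaleR N continuous_intros)
    using Nz by (auto simp: Qof_def intro!: continuous_intros)
qed

lemma sp_closed: "closed (sphere_prod k m)"
proof -
  have e: "sphere_prod k m = (\<Inter>i\<in>{k..}. {p. p i = ((\<lambda>_. 0), 0)}) \<inter>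
    (\<Inter>i\<in>{..<k}. (\<Inter>j\<in>{m i - 3..}. {p. fst (p i) j = 0}) \<inter>
        {p. (\<Sum>j<m i - 3. (fst (p i) j)\<^sup>2) + (norm (snd (p i)))\<^sup>2 = 1})"
    by (auto simp: sphere_prod_def)
  show ?thesis unfolding e
    by (intro closed_Int closed_INT ballI closed_Collect_eq continuous_intros)
qed

lemma sp_compact: "compact (sphere_prod k m)"
proof -
  define K1 where "K1 = PiE UNIV (\<lambda>_::nat. {-1..1::real})"
  have "compactin (product_topology (\<lambda>_. euclidean) UNIV) K1"
    unfolding K1_def by (simp add: compactin_PiE)
  then have cK1: "compact K1" by (simp add: euclidean_product_topology)
  define K where "K = K1 \<times> cball (0::quat) 1"
  have cK: "compact K" unfolding K_def using cK1 by (intro compact_Times) auto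
  define C where "C = PiE UNIV (\<lambda>_::nat. K)"
  have "compactin (product_topology (\<lambda>_. euclidean) UNIV) C"
    unfolding C_def using cK by (simp add: compactin_PiE)
  then have cC: "compact C" by (simp add: euclidean_product_topology)
  have sub: "sphere_prod k m \<subseteq> C"
  proof
    fix p assume p: "p \<in> sphere_prod k m"
    have "p i \<in> K" for i
    proof (cases "i < k")
      case False
      then show ?thesis using sp_out[OF p, of i] by (simp add: K_def K1_def PiE_iff)
    next
      case True
      have eq: "(\<Sum>j<m i - 3. (fst (p i) j)\<^sup>2) + (norm (snd (p i)))\<^sup>2 = 1"
        using sp_eq[OF p True] by (simp add: Asq_def)
      have S0: "0 \<le> (\<Sum>j<m i - 3. (fst (p i) j)\<^sup>2)" by (simp add: sum_nonneg)
      have "(norm (snd (p i)))\<^sup>2 \<le> 1" using eq S0 by linarith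
      then have nq: "norm (snd (p i)) \<le> 1" by (simp add: power_le_one_iff abs_square_le_1)
      have "fst (p i) j \<in> {-1..1}" for j
      proof (cases "j < m i - 3")
        case True
        have "(fst (p i) j)\<^sup>2 \<le> (\<Sum>j<m i - 3. (fst (p i) j)\<^sup>2)"
          using True by (intro member_le_sum) auto
        also have "\<dots> \<le> 1" using eq zero_le_power2[of "norm (snd (p i))"] by linarith
        finally show ?thesis by (simp add: abs_square_le_1 abs_le_iff)
      next
        case False
        then show ?thesis using sp_zero[OF p \<open>i < k\<close>, of j] by simp
      qed
      then show ?thesis using nq by (auto simp: K_def K1_def mem_Times_iff PiE_iff)
    qed
    then show "p \<in> C" by (simp add: C_def PiE_iff)
  qed
  have "sphere_prod k m = C \<inter> sphere_prod k m" using sub by blast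
  then show ?thesis using cC sp_closed by (metis compact_Int_closed)
qed

theorem theorem3:
  fixes k :: nat and m :: "nat \<Rightarrow> nat"
  assumes "k \<ge> 2" and "\<forall>i<k. m i \<ge> 4"
  shows "continuous_on (sphere_prod k m) (orbit_proj k m)
    \<and> quotient_map (top_of_set (sphere_prod k m)) (top_of_set (target_sphere k m)) (orbit_proj k m)
    \<and> (\<forall>p\<in>sphere_prod k m. \<forall>p'\<in>sphere_prod k m.
          orbit_proj k m p = orbit_proj k m p' \<longleftrightarrow> (\<exists>r\<in>unit_tuples k. p' = qt_act k r p))"
proof (intro conjI)
  show c: "continuous_on (sphere_prod k m) (orbit_proj k m)" by (rule cont_proj)
  have img: "orbit_proj k m ` sphere_prod k m = target_sphere k m"
  proof
    show "orbit_proj k m ` sphere_prod k m \<subseteq> target_sphere k m" using img_sub by blast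
    show "target_sphere k m \<subseteq> orbit_proj k m ` sphere_prod k m"
    proof
      fix y assume "y \<in> target_sphere k m"
      then obtain p where "p \<in> sphere_prod k m" "orbit_proj k m p = y"
        using img_sup[of y k m] assms(1) by auto
      then show "y \<in> orbit_proj k m ` sphere_prod k m" by blast
    qed
  qed
  show "quotient_map (top_of_set (sphere_prod k m)) (top_of_set (target_sphere k m)) (orbit_proj k m)"
  proof (rule T1_Spaces.continuous_imp_quotient_map)
    show "continuous_map (top_of_set (sphere_prod k m)) (top_of_set (target_sphere k m)) (orbit_proj k m)"
      using c img by auto
    show "compact_space (top_of_set (sphere_prod k m))"
      by (rule compact_space_subtopology) (simp add: sp_compact)
    show "Hausdorff_space (top_of_set (target_sphere k m))"
      by (simp add: Hausdorff_space_subtopology)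
    show "orbit_proj k m ` topspace (top_of_set (sphere_prod k m)) = topspace (top_of_set (target_sphere k m))"
      using img by simp
  qed
  show "\<forall>p\<in>sphere_prod k m. \<forall>p'\<in>sphere_prod k m.
          orbit_proj k m p = orbit_proj k m p' \<longleftrightarrow> (\<exists>r\<in>unit_tuples k. p' = qt_act k r p)"
  proof (intro ballI iffI)
    fix p p' assume "p \<in> sphere_prod k m" "p' \<in> sphere_prod k m" "orbit_proj k m p = orbit_proj k m p'"
    then show "\<exists>r\<in>unit_tuples k. p' = qt_act k r p" by (rule fibre_fwd)
  next
    fix p p' assume "\<exists>r\<in>unit_tuples k. p' = qt_act k r p"
    then obtain r where "r \<in> unit_tuples k" "p' = qt_act k r p" by blast
    then show "orbit_proj k m p = orbit_proj k m p'" using fibre_bwd by metis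
  qed
qed

end
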